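(* Let $\phi=k_1\wedge\dots\wedge k_m$ be a 3CNF in propositional variables $p_1,\dots,p_n$, and let $F(x_1,\dots,x_n,y_1,\dots,y_m)$ be any non-commutative formula over $GF(2)$. Then the propositional formula $$\Big(\neg F_{bool}(\bar p,\bar 0)\ \wedge\ F_{bool}\big(\bar p, Q^\phi_{1,bool}(\bar p),\dots,Q^\phi_{m,bool}(\bar p)\big)\Big)\ \rightarrow\ \neg\phi$$ has a Frege proof of size polynomial in the sizes of $F$ and $\phi$.
   Context: For a non-commutative formula $G$ over $GF(2)$, $G_{bool}$ is the Boolean formula obtained by replacing every $+$ gate by $\oplus$ (XOR), every $\times$ gate by $\wedge$, constants $0,1$ by $\mathsf{false},\mathsf{true}$, and each variable $x_i$ by $p_i$; $F_{bool}(\bar p,\bar 0)$ means $y_j$ replaced by $\mathsf{false}$, and $F_{bool}(\bar p,Q_{1,bool},\dots)$ means each $y_j$ replaced by the formula $Q^\phi_{j,bool}(\bar p)$. $Q^\phi_i=\mathrm{tr}'(k_i)$, where $\mathrm{tr}'(x)=1+x$ (i.e. $1-x$ over $GF(2)$), $\mathrm{tr}'(\neg x)=x$, and $\mathrm{tr}'(\ell_1\lor\dots\lor\ell_r)=\mathrm{tr}'(\ell_1)\cdots\mathrm{tr}'(\ell_r)$ (a tree of product gates). Frege: a fixed propositional proof system with finitely many sound axiom schemes and rules, implicationally complete, lines being Boolean formulas; size = total number of symbols. *)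

theory Defs
  imports Main
begin

datatype form =
    PVar nat
  | TT
  | FF
  | Neg form
  | Conj form form
  | Disj form form
  | Impl form form
  | Xor form form

fun eval :: "(nat \<Rightarrow> bool) \<Rightarrow> form \<Rightarrow> bool" where
  "eval v (PVar i) = v i"
| "eval v TT = True"
| "eval v FF = False"
| "eval v (Neg a) = (\<not> eval v a)"
| "eval v (Conj a b) = (eval v a \<and> eval v b)"
| "eval v (Disj a b) = (eval v a \<or> eval v b)"
| "eval v (Impl a b) = (eval v a \<longrightarrow> eval v b)"
| "eval v (Xor a b) = (eval v a \<noteq> eval v b)"

fun fsize :: "form \<Rightarrow> nat" where
  "fsize (PVar i) = 1"
| "fsize TT = 1"
| "fsize FF = 1"
| "fsize (Neg a) = 1 + fsize a"
| "fsize (Conj a b) = 1 + fsize a + fsize b"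
| "fsize (Disj a b) = 1 + fsize a + fsize b"
| "fsize (Impl a b) = 1 + fsize a + fsize b"
| "fsize (Xor a b) = 1 + fsize a + fsize b"

fun subst :: "(nat \<Rightarrow> form) \<Rightarrow> form \<Rightarrow> form" where
  "subst s (PVar i) = s i"
| "subst s TT = TT"
| "subst s FF = FF"
| "subst s (Neg a) = Neg (subst s a)"
| "subst s (Conj a b) = Conj (subst s a) (subst s b)"
| "subst s (Disj a b) = Disj (subst s a) (subst s b)"
| "subst s (Impl a b) = Impl (subst s a) (subst s b)"
| "subst s (Xor a b) = Xor (subst s a) (subst s b)"

text \<open>A rule scheme: a list of premise schemes and a conclusion scheme
  (axiom schemes are rules without premises); metavariables are the PVar's,
  instantiated by substitution.\<close>
type_synonym rule = "form list \<times> form"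

definition sound_rule :: "rule \<Rightarrow> bool" where
  "sound_rule r \<longleftrightarrow> (\<forall>v. (\<forall>p\<in>set (fst r). eval v p) \<longrightarrow> eval v (snd r))"

definition derivation :: "rule set \<Rightarrow> form set \<Rightarrow> form list \<Rightarrow> bool" where
  "derivation R \<Gamma> ls \<longleftrightarrow>
     (\<forall>k < length ls. ls ! k \<in> \<Gamma> \<or>
        (\<exists>r\<in>R. \<exists>\<sigma>. subst \<sigma> (snd r) = ls ! k \<and>
                   (\<forall>p\<in>set (fst r). subst \<sigma> p \<in> set (take k ls))))"

definition derivable_from :: "rule set \<Rightarrow> form set \<Rightarrow> form \<Rightarrow> bool" where
  "derivable_from R \<Gamma> A \<longleftrightarrow> (\<exists>ls. derivation R \<Gamma> ls \<and> ls \<noteq> [] \<and> last ls = A)"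

definition implicationally_complete :: "rule set \<Rightarrow> bool" where
  "implicationally_complete R \<longleftrightarrow>
     (\<forall>\<Gamma> A. finite \<Gamma> \<longrightarrow> (\<forall>v. (\<forall>g\<in>\<Gamma>. eval v g) \<longrightarrow> eval v A) \<longrightarrow> derivable_from R \<Gamma> A)"

definition frege_system :: "rule set \<Rightarrow> bool" where
  "frege_system R \<longleftrightarrow> finite R \<and> (\<forall>r\<in>R. sound_rule r) \<and> implicationally_complete R"

definition frege_proof :: "rule set \<Rightarrow> form list \<Rightarrow> form \<Rightarrow> bool" where
  "frege_proof R ls A \<longleftrightarrow> derivation R {} ls \<and> ls \<noteq> [] \<and> last ls = A"

definition proof_size :: "form list \<Rightarrow> nat" where
  "proof_size ls = sum_list (map fsize ls)"

text \<open>Variables x_i (XV i) and y_j (YV j); constants 0, 1; gates + and \<times>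
  (children ordered, i.e. non-commutative formulas).\<close>
datatype ncf =
    XV nat
  | YV nat
  | Zero
  | One
  | Plus ncf ncf
  | Times ncf ncf

fun ncsize :: "ncf \<Rightarrow> nat" where
  "ncsize (XV i) = 1"
| "ncsize (YV j) = 1"
| "ncsize Zero = 1"
| "ncsize One = 1"
| "ncsize (Plus a b) = 1 + ncsize a + ncsize b"
| "ncsize (Times a b) = 1 + ncsize a + ncsize b"

fun xvars :: "ncf \<Rightarrow> nat set" where
  "xvars (XV i) = {i}"
| "xvars (YV j) = {}"
| "xvars Zero = {}"
| "xvars One = {}"
| "xvars (Plus a b) = xvars a \<union> xvars b"
| "xvars (Times a b) = xvars a \<union> xvars b"

fun yvars :: "ncf \<Rightarrow> nat set" where
  "yvars (XV i) = {}"
| "yvars (YV j) = {j}"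
| "yvars Zero = {}"
| "yvars One = {}"
| "yvars (Plus a b) = yvars a \<union> yvars b"
| "yvars (Times a b) = yvars a \<union> yvars b"

fun to_bool :: "(nat \<Rightarrow> form) \<Rightarrow> ncf \<Rightarrow> form" where
  "to_bool ys (XV i) = PVar i"
| "to_bool ys (YV j) = ys j"
| "to_bool ys Zero = FF"
| "to_bool ys One = TT"
| "to_bool ys (Plus a b) = Xor (to_bool ys a) (to_bool ys b)"
| "to_bool ys (Times a b) = Conj (to_bool ys a) (to_bool ys b)"

datatype lit = Pos nat | NegLit nat

type_synonym clause = "lit list"
type_synonym cnf = "clause list"

fun lit_var :: "lit \<Rightarrow> nat" where
  "lit_var (Pos i) = i"
| "lit_var (NegLit i) = i"

fun lit_form :: "lit \<Rightarrow> form" where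
  "lit_form (Pos i) = PVar i"
| "lit_form (NegLit i) = Neg (PVar i)"

fun clause_form :: "clause \<Rightarrow> form" where
  "clause_form [] = FF"
| "clause_form [l] = lit_form l"
| "clause_form (l # ls) = Disj (lit_form l) (clause_form ls)"

fun cnf_form :: "cnf \<Rightarrow> form" where
  "cnf_form [] = TT"
| "cnf_form [k] = clause_form k"
| "cnf_form (k # ks) = Conj (clause_form k) (cnf_form ks)"

definition is_3cnf :: "cnf \<Rightarrow> bool" where
  "is_3cnf \<phi> \<longleftrightarrow> (\<forall>k\<in>set \<phi>. 1 \<le> length k \<and> length k \<le> 3)"

definition cnf_vars :: "cnf \<Rightarrow> nat set" where
  "cnf_vars \<phi> = lit_var ` (\<Union>k\<in>set \<phi>. set k)"

fun tr_lit :: "lit \<Rightarrow> ncf" where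
  "tr_lit (Pos i) = Plus One (XV i)"
| "tr_lit (NegLit i) = XV i"

fun tr_clause :: "clause \<Rightarrow> ncf" where
  "tr_clause [] = One"
| "tr_clause [l] = tr_lit l"
| "tr_clause (l # ls) = Times (tr_lit l) (tr_clause ls)"

text \<open>Q^\<phi>_i = tr'(k_i) (0-based index i).\<close>
definition Q :: "cnf \<Rightarrow> nat \<Rightarrow> ncf" where
  "Q \<phi> i = tr_clause (\<phi> ! i)"

definition target_formula :: "cnf \<Rightarrow> ncf \<Rightarrow> form" where
  "target_formula \<phi> F =
     Impl (Conj (Neg (to_bool (\<lambda>_. FF) F))
                (to_bool (\<lambda>j. to_bool (\<lambda>_. FF) (Q \<phi> j)) F))
          (Neg (cnf_form \<phi>))"

end

theory Submission
  imports Defs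
begin

definition prv :: "rule set \<Rightarrow> form \<Rightarrow> nat \<Rightarrow> bool" where
  "prv R A s \<longleftrightarrow> (\<exists>ls. derivation R {} ls \<and> ls \<noteq> [] \<and> last ls = A \<and> proof_size ls \<le> s)"

definition inst :: "form list \<Rightarrow> nat \<Rightarrow> form" where
  "inst xs i = (if i < length xs then xs ! i else TT)"

lemma subst_subst: "subst \<sigma> (subst \<tau> f) = subst (subst \<sigma> \<circ> \<tau>) f"
  by (induction f) auto

lemma fsize_pos: "1 \<le> fsize f"
  by (induction f) auto

lemma fsize_subst: "(\<forall>i. fsize (\<sigma> i) \<le> B) \<Longrightarrow> 1 \<le> B \<Longrightarrow> fsize (subst \<sigma> f) \<le> fsize f * B"
  by (induction f) (auto simp: algebra_simps)

lemma deriv_subst: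
  assumes "derivation R \<Gamma> ls"
  shows "derivation R (subst \<sigma> ` \<Gamma>) (map (subst \<sigma>) ls)"
  unfolding derivation_def
proof (intro allI impI)
  fix k assume k: "k < length (map (subst \<sigma>) ls)"
  hence k': "k < length ls" by simp
  from assms k' have
    "ls ! k \<in> \<Gamma> \<or> (\<exists>r\<in>R. \<exists>\<tau>. subst \<tau> (snd r) = ls ! k \<and>
        (\<forall>p\<in>set (fst r). subst \<tau> p \<in> set (take k ls)))"
    unfolding derivation_def by blast
  thus "map (subst \<sigma>) ls ! k \<in> subst \<sigma> ` \<Gamma> \<or>
    (\<exists>r\<in>R. \<exists>\<tau>. subst \<tau> (snd r) = map (subst \<sigma>) ls ! k \<and>
        (\<forall>p\<in>set (fst r). subst \<tau> p \<in> set (take k (map (subst \<sigma>) ls))))"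
  proof
    assume "ls ! k \<in> \<Gamma>" thus ?thesis using k' by auto
  next
    assume "\<exists>r\<in>R. \<exists>\<tau>. subst \<tau> (snd r) = ls ! k \<and>
        (\<forall>p\<in>set (fst r). subst \<tau> p \<in> set (take k ls))"
    then obtain r \<tau> where r: "r \<in> R" "subst \<tau> (snd r) = ls ! k"
      "\<forall>p\<in>set (fst r). subst \<tau> p \<in> set (take k ls)" by blast
    have "subst (subst \<sigma> \<circ> \<tau>) (snd r) = map (subst \<sigma>) ls ! k"
      using r(2) k' by (simp add: subst_subst[symmetric])
    moreover have "\<forall>p\<in>set (fst r). subst (subst \<sigma> \<circ> \<tau>) p \<in> set (take k (map (subst \<sigma>) ls))"
      using r(3) by (auto simp: subst_subst[symmetric] take_map)
    ultimately show ?thesis using r(1) by blast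
  qed
qed

lemma deriv_app:
  assumes d1: "derivation R \<Gamma> ls1" and d2: "derivation R \<Gamma>2 ls2"
    and sub: "\<Gamma>2 \<subseteq> \<Gamma> \<union> set ls1"
  shows "derivation R \<Gamma> (ls1 @ ls2)"
  unfolding derivation_def
proof (intro allI impI)
  fix k assume k: "k < length (ls1 @ ls2)"
  define ok where "ok S x \<longleftrightarrow> x \<in> \<Gamma> \<or> (\<exists>r\<in>R. \<exists>\<sigma>. subst \<sigma> (snd r) = x \<and>
        (\<forall>p\<in>set (fst r). subst \<sigma> p \<in> S))" for S x
  have mono: "ok S x \<Longrightarrow> S \<subseteq> S' \<Longrightarrow> ok S' x" for S S' x
    unfolding ok_def by blast
  have "ok (set (take k (ls1 @ ls2))) ((ls1 @ ls2) ! k)"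
  proof (cases "k < length ls1")
    case True
    with d1 have "ok (set (take k ls1)) (ls1 ! k)" unfolding derivation_def ok_def by blast
    thus ?thesis using True by (simp add: nth_append)
  next
    case False
    define k2 where "k2 = k - length ls1"
    have k2: "k2 < length ls2" using k False k2_def by simp
    have eqk: "(ls1 @ ls2) ! k = ls2 ! k2" using False k2_def by (simp add: nth_append)
    have eqt: "set (take k (ls1 @ ls2)) = set ls1 \<union> set (take k2 ls2)"
      using False k2_def by simp
    from d2 k2 have "ls2 ! k2 \<in> \<Gamma>2 \<or> (\<exists>r\<in>R. \<exists>\<sigma>. subst \<sigma> (snd r) = ls2 ! k2 \<and>
        (\<forall>p\<in>set (fst r). subst \<sigma> p \<in> set (take k2 ls2)))"
      unfolding derivation_def by blast
    thus ?thesis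
    proof
      assume h: "ls2 ! k2 \<in> \<Gamma>2"
      show ?thesis
      proof (cases "ls2 ! k2 \<in> \<Gamma>")
        case True thus ?thesis unfolding eqk ok_def by blast
      next
        case False
        with h sub have "ls2 ! k2 \<in> set ls1" by blast
        then obtain k0 where k0: "k0 < length ls1" "ls1 ! k0 = ls2 ! k2"
          by (auto simp: in_set_conv_nth)
        with d1 have "ok (set (take k0 ls1)) (ls1 ! k0)"
          unfolding derivation_def ok_def by blast
        moreover have "set (take k0 ls1) \<subseteq> set (take k (ls1 @ ls2))"
          unfolding eqt by (meson UnI1 in_set_takeD subsetI)
        ultimately show ?thesis using mono k0 eqk by metis
      qed
    next
      assume "\<exists>r\<in>R. \<exists>\<sigma>. subst \<sigma> (snd r) = ls2 ! k2 \<and>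
        (\<forall>p\<in>set (fst r). subst \<sigma> p \<in> set (take k2 ls2))"
      thus ?thesis unfolding eqk ok_def eqt by blast
    qed
  qed
  thus "(ls1 @ ls2) ! k \<in> \<Gamma> \<or> (\<exists>r\<in>R. \<exists>\<sigma>. subst \<sigma> (snd r) = (ls1 @ ls2) ! k \<and>
        (\<forall>p\<in>set (fst r). subst \<sigma> p \<in> set (take k (ls1 @ ls2))))"
    unfolding ok_def .
qed

lemma deriv_nil: "derivation R \<Gamma> []"
  by (simp add: derivation_def)

lemma proof_size_app: "proof_size (a @ b) = proof_size a + proof_size b"
  by (simp add: proof_size_def)

lemma concat_prems:
  "list_all2 (\<lambda>p t. prv R p t) ps ts \<Longrightarrow>
   \<exists>L. derivation R {} L \<and> proof_size L \<le> sum_list ts \<and> set ps \<subseteq> set L"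
proof (induction ps arbitrary: ts)
  case Nil thus ?case by (intro exI[of _ "[]"]) (auto simp: proof_size_def deriv_nil)
next
  case (Cons p ps)
  then obtain t ts' where ts: "ts = t # ts'" "prv R p t" "list_all2 (\<lambda>p t. prv R p t) ps ts'"
    by (cases ts) auto
  from Cons.IH[OF ts(3)] obtain L where L: "derivation R {} L" "proof_size L \<le> sum_list ts'" "set ps \<subseteq> set L"
    by blast
  from ts(2) obtain ls where ls: "derivation R {} ls" "ls \<noteq> []" "last ls = p" "proof_size ls \<le> t"
    unfolding prv_def by blast
  have "derivation R {} (ls @ L)" using deriv_app[OF ls(1) L(1)] by simp
  moreover have "proof_size (ls @ L) \<le> sum_list ts" using ls(4) L(2) ts(1) by (simp add: proof_size_app)
  moreover have "set (p # ps) \<subseteq> set (ls @ L)" using ls(2,3) L(3) by auto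
  ultimately show ?case by blast
qed

definition cR :: "rule set \<Rightarrow> rule \<Rightarrow> nat" where
  "cR R r = proof_size (SOME ls. derivation R (set (fst r)) ls \<and> ls \<noteq> [] \<and> last ls = snd r)"

lemma macro:
  assumes fs: "frege_system R" and sr: "sound_rule r"
    and prems: "list_all2 (\<lambda>p t. prv R (subst (inst xs) p) t) (fst r) ts"
    and xs: "\<forall>x\<in>set xs. fsize x \<le> B" and B: "1 \<le> B"
  shows "prv R (subst (inst xs) (snd r)) (sum_list ts + cR R r * B)"
proof -
  let ?\<sigma> = "inst xs"
  let ?P = "\<lambda>ls. derivation R (set (fst r)) ls \<and> ls \<noteq> [] \<and> last ls = snd r"
  have "derivable_from R (set (fst r)) (snd r)"
    using fs sr unfolding frege_system_def implicationally_complete_def sound_rule_def by blast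
  hence "\<exists>ls. ?P ls" unfolding derivable_from_def by blast
  hence lr: "?P (SOME ls. ?P ls)" by (rule someI_ex)
  define lr where "lr = (SOME ls. ?P ls)"
  have lr1: "?P lr" using lr lr_def by simp
  have "list_all2 (\<lambda>p t. prv R p t) (map (subst ?\<sigma>) (fst r)) ts"
    using prems by (simp add: list_all2_map1)
  from concat_prems[OF this] obtain L where L: "derivation R {} L" "proof_size L \<le> sum_list ts"
    "set (map (subst ?\<sigma>) (fst r)) \<subseteq> set L" by blast
  define l' where "l' = map (subst ?\<sigma>) lr"
  have d': "derivation R (subst ?\<sigma> ` set (fst r)) l'"
    unfolding l'_def using deriv_subst lr1 by blast
  have dall: "derivation R {} (L @ l')"
    by (rule deriv_app[OF L(1) d']) (use L(3) in auto)
  have ne: "L @ l' \<noteq> []" using lr1 l'_def by simp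
  have la: "last (L @ l') = subst ?\<sigma> (snd r)"
    using lr1 unfolding l'_def by (simp add: last_map)
  have bnd: "\<forall>i. fsize (?\<sigma> i) \<le> B" using xs B by (auto simp: inst_def)
  have "proof_size l' = (\<Sum>l\<leftarrow>lr. fsize (subst ?\<sigma> l))"
    unfolding l'_def proof_size_def by (simp add: comp_def)
  also have "\<dots> \<le> (\<Sum>l\<leftarrow>lr. fsize l * B)"
    by (rule sum_list_mono) (use fsize_subst[OF bnd B] in auto)
  also have "\<dots> = proof_size lr * B"
    unfolding proof_size_def by (induction lr) (auto simp: algebra_simps)
  also have "\<dots> = cR R r * B" unfolding cR_def lr_def by simp
  finally have "proof_size (L @ l') \<le> sum_list ts + cR R r * B"
    using L(2) by (simp add: proof_size_app)
  thus ?thesis unfolding prv_def using dall ne la by blast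
qed


abbreviation Iff :: "form \<Rightarrow> form \<Rightarrow> form" where "Iff a b \<equiv> Neg (Xor a b)"

definition "r_refl = ([], Impl (PVar 0) (Iff (PVar 1) (PVar 1)))"
definition "r_plus = ([Impl (PVar 0) (Iff (PVar 1) (PVar 2)), Impl (PVar 0) (Iff (PVar 3) (PVar 4))],
   Impl (PVar 0) (Iff (Xor (PVar 1) (PVar 3)) (Xor (PVar 2) (PVar 4))))"
definition "r_times = ([Impl (PVar 0) (Iff (PVar 1) (PVar 2)), Impl (PVar 0) (Iff (PVar 3) (PVar 4))],
   Impl (PVar 0) (Iff (Conj (PVar 1) (PVar 3)) (Conj (PVar 2) (PVar 4))))"
definition "r_final = ([Impl (PVar 0) (Iff (PVar 1) (PVar 2))], Impl (Conj (Neg (PVar 2)) (PVar 1)) (Neg (PVar 0)))"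
definition "r_syl = ([Impl (PVar 0) (PVar 1), Impl (PVar 1) (PVar 2)], Impl (PVar 0) (PVar 2))"
definition "r_ff = ([Impl (PVar 0) (Neg (PVar 1))], Impl (PVar 0) (Iff (PVar 1) FF))"
definition "r_cnf0 = ([], Impl (Conj (PVar 0) (PVar 1)) (PVar 0))"
definition "r_cnfS = ([Impl (PVar 1) (PVar 2)], Impl (Conj (PVar 0) (PVar 1)) (PVar 2))"
definition "r_id = ([], Impl (PVar 0) (PVar 0))"
definition "r_pos = ([], Impl (PVar 0) (Neg (Xor TT (PVar 0))))"
definition "r_clcons = ([Impl (PVar 0) (Neg (PVar 1)), Impl (PVar 2) (Neg (PVar 3))],
   Impl (Disj (PVar 0) (PVar 2)) (Neg (Conj (PVar 1) (PVar 3))))"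
definition "r_empty = ([], Impl FF (Neg TT))"

definition "rules = [r_refl, r_plus, r_times, r_final, r_syl, r_ff, r_cnf0, r_cnfS, r_id, r_pos, r_clcons, r_empty]"

definition Call :: "rule set \<Rightarrow> nat" where "Call R = sum_list (map (cR R) rules)"

lemma rules_sound: "r \<in> set rules \<Longrightarrow> sound_rule r"
  unfolding rules_def sound_rule_def
  by (auto simp: r_refl_def r_plus_def r_times_def r_final_def r_syl_def r_ff_def r_cnf0_def
      r_cnfS_def r_id_def r_pos_def r_clcons_def r_empty_def)

lemma cR_le: "r \<in> set rules \<Longrightarrow> cR R r \<le> Call R"
  unfolding Call_def by (simp add: member_le_sum_list)

lemma prv_mono: "prv R A s \<Longrightarrow> s \<le> s' \<Longrightarrow> prv R A s'"
  unfolding prv_def by fastforce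

lemma mac:
  assumes "frege_system R" "r \<in> set rules"
    "list_all2 (\<lambda>p t. prv R (subst (inst xs) p) t) (fst r) ts"
    "\<forall>x\<in>set xs. fsize x \<le> B" "1 \<le> B" "sum_list ts \<le> s" "subst (inst xs) (snd r) = A"
  shows "prv R A (s + Call R * B)"
proof -
  have "prv R A (sum_list ts + cR R r * B)"
    using macro[OF assms(1) rules_sound[OF assms(2)] assms(3,4,5)] assms(7) by simp
  moreover have "sum_list ts + cR R r * B \<le> s + Call R * B"
    using assms(6) cR_le[OF assms(2), of R] by (simp add: add_mono)
  ultimately show ?thesis by (rule prv_mono)
qed

context
  fixes R and B :: nat assumes fs: "frege_system R" and B2: "2 \<le> B"
begin

lemma B1: "1 \<le> B" using B2 by simp

lemma m_refl: "fsize P \<le> B \<Longrightarrow> fsize a \<le> B \<Longrightarrow> prv R (Impl P (Iff a a)) (Call R * B)"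
  using mac[OF fs _ _ _ B1, of r_refl "[P, a]" "[]" 0] by (simp add: rules_def r_refl_def inst_def)

lemma m_plus: "fsize P \<le> B \<Longrightarrow> fsize a1 \<le> B \<Longrightarrow> fsize a0 \<le> B \<Longrightarrow> fsize b1 \<le> B \<Longrightarrow> fsize b0 \<le> B \<Longrightarrow>
  prv R (Impl P (Iff a1 a0)) s1 \<Longrightarrow> prv R (Impl P (Iff b1 b0)) s2 \<Longrightarrow>
  prv R (Impl P (Iff (Xor a1 b1) (Xor a0 b0))) (s1 + s2 + Call R * B)"
  using mac[OF fs _ _ _ B1, of r_plus "[P, a1, a0, b1, b0]" "[s1, s2]" "s1+s2"]
  by (simp add: rules_def r_plus_def inst_def)

lemma m_times: "fsize P \<le> B \<Longrightarrow> fsize a1 \<le> B \<Longrightarrow> fsize a0 \<le> B \<Longrightarrow> fsize b1 \<le> B \<Longrightarrow> fsize b0 \<le> B \<Longrightarrow>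
  prv R (Impl P (Iff a1 a0)) s1 \<Longrightarrow> prv R (Impl P (Iff b1 b0)) s2 \<Longrightarrow>
  prv R (Impl P (Iff (Conj a1 b1) (Conj a0 b0))) (s1 + s2 + Call R * B)"
  using mac[OF fs _ _ _ B1, of r_times "[P, a1, a0, b1, b0]" "[s1, s2]" "s1+s2"]
  by (simp add: rules_def r_times_def inst_def)

lemma m_final: "fsize P \<le> B \<Longrightarrow> fsize a \<le> B \<Longrightarrow> fsize b \<le> B \<Longrightarrow>
  prv R (Impl P (Iff a b)) s1 \<Longrightarrow> prv R (Impl (Conj (Neg b) a) (Neg P)) (s1 + Call R * B)"
  using mac[OF fs _ _ _ B1, of r_final "[P, a, b]" "[s1]" "s1"]
  by (simp add: rules_def r_final_def inst_def)

lemma m_syl: "fsize a \<le> B \<Longrightarrow> fsize b \<le> B \<Longrightarrow> fsize c \<le> B \<Longrightarrow>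
  prv R (Impl a b) s1 \<Longrightarrow> prv R (Impl b c) s2 \<Longrightarrow> prv R (Impl a c) (s1 + s2 + Call R * B)"
  using mac[OF fs _ _ _ B1, of r_syl "[a, b, c]" "[s1, s2]" "s1+s2"]
  by (simp add: rules_def r_syl_def inst_def)

lemma m_ff: "fsize a \<le> B \<Longrightarrow> fsize b \<le> B \<Longrightarrow>
  prv R (Impl a (Neg b)) s1 \<Longrightarrow> prv R (Impl a (Iff b FF)) (s1 + Call R * B)"
  using mac[OF fs _ _ _ B1, of r_ff "[a, b]" "[s1]" "s1"]
  by (simp add: rules_def r_ff_def inst_def)

lemma m_cnf0: "fsize a \<le> B \<Longrightarrow> fsize b \<le> B \<Longrightarrow> prv R (Impl (Conj a b) a) (Call R * B)"
  using mac[OF fs _ _ _ B1, of r_cnf0 "[a, b]" "[]" 0] by (simp add: rules_def r_cnf0_def inst_def)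

lemma m_cnfS: "fsize a \<le> B \<Longrightarrow> fsize b \<le> B \<Longrightarrow> fsize c \<le> B \<Longrightarrow>
  prv R (Impl b c) s1 \<Longrightarrow> prv R (Impl (Conj a b) c) (s1 + Call R * B)"
  using mac[OF fs _ _ _ B1, of r_cnfS "[a, b, c]" "[s1]" "s1"]
  by (simp add: rules_def r_cnfS_def inst_def)

lemma m_id: "fsize a \<le> B \<Longrightarrow> prv R (Impl a a) (Call R * B)"
  using mac[OF fs _ _ _ B1, of r_id "[a]" "[]" 0] by (simp add: rules_def r_id_def inst_def)

lemma m_pos: "fsize a \<le> B \<Longrightarrow> prv R (Impl a (Neg (Xor TT a))) (Call R * B)"
  using mac[OF fs _ _ _ B1, of r_pos "[a]" "[]" 0] by (simp add: rules_def r_pos_def inst_def)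

lemma m_clcons: "fsize a \<le> B \<Longrightarrow> fsize b \<le> B \<Longrightarrow> fsize c \<le> B \<Longrightarrow> fsize d \<le> B \<Longrightarrow>
  prv R (Impl a (Neg b)) s1 \<Longrightarrow> prv R (Impl c (Neg d)) s2 \<Longrightarrow>
  prv R (Impl (Disj a c) (Neg (Conj b d))) (s1 + s2 + Call R * B)"
  using mac[OF fs _ _ _ B1, of r_clcons "[a, b, c, d]" "[s1, s2]" "s1+s2"]
  by (simp add: rules_def r_clcons_def inst_def)

lemma m_empty: "prv R (Impl FF (Neg TT)) (Call R * B)"
  using mac[OF fs _ _ _ B1, of r_empty "[]" "[]" 0] by (simp add: rules_def r_empty_def inst_def)

end


abbreviation trb :: "clause \<Rightarrow> form" where "trb k \<equiv> to_bool (\<lambda>_. FF) (tr_clause k)"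

lemma clause_in_cnf: "k \<in> set \<phi> \<Longrightarrow> fsize (clause_form k) \<le> fsize (cnf_form \<phi>)"
  by (induction \<phi> rule: cnf_form.induct) auto

lemma fsize_gt0: "0 < fsize f"
  by (cases f) auto

lemma len_cnf: "length \<phi> \<le> fsize (cnf_form \<phi>)"
  by (induction \<phi> rule: cnf_form.induct) (auto simp: fsize_gt0 Suc_le_eq)

lemma len_clause: "length k \<le> fsize (clause_form k)"
proof (induction k rule: clause_form.induct)
  case (2 l) thus ?case by (cases l) auto
qed auto

lemma trlit_le: "fsize (to_bool (\<lambda>_. FF) (tr_lit l)) \<le> 3 * fsize (lit_form l)"
  by (cases l) auto

lemma trb_le: "fsize (trb k) \<le> 4 * fsize (clause_form k)"
proof (induction k rule: clause_form.induct)
  case (2 l) thus ?case using trlit_le[of l] by simp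
next
  case (3 l v va) thus ?case using trlit_le[of l] by simp
qed auto

lemma to_bool_size: "(\<forall>j\<in>yvars G. fsize (ys j) \<le> M) \<Longrightarrow> 1 \<le> M \<Longrightarrow> fsize (to_bool ys G) \<le> ncsize G * M"
  by (induction G) (auto simp: algebra_simps)

context
  fixes R and B :: nat assumes fs: "frege_system R" and B2: "2 \<le> B"
begin

lemma lit_prv: "prv R (Impl (lit_form l) (Neg (to_bool (\<lambda>_. FF) (tr_lit l)))) (Call R * B)"
proof (cases l)
  case (Pos i) thus ?thesis using m_pos[OF fs B2, of "PVar i"] B2 by simp
next
  case (NegLit i) thus ?thesis using m_id[OF fs B2, of "Neg (PVar i)"] B2 by simp
qed

lemma clause_prv: "fsize (clause_form k) \<le> B \<Longrightarrow> fsize (trb k) \<le> B \<Longrightarrow>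
  prv R (Impl (clause_form k) (Neg (trb k))) (2 * length k * (Call R * B) + Call R * B)"
proof (induction k rule: clause_form.induct)
  case 1 thus ?case using m_empty[OF fs B2] by simp
next
  case (2 l) thus ?case using lit_prv[of l] prv_mono by fastforce
next
  case (3 l v va)
  have IH: "prv R (Impl (clause_form (v # va)) (Neg (trb (v # va))))
      (2 * length (v # va) * (Call R * B) + Call R * B)"
    using 3 by simp
  have s: "fsize (lit_form l) \<le> B" "fsize (to_bool (\<lambda>_. FF) (tr_lit l)) \<le> B"
    "fsize (clause_form (v # va)) \<le> B" "fsize (trb (v # va)) \<le> B" using 3(2,3) by auto
  from m_clcons[OF fs B2 s lit_prv IH] show ?case by (simp add: algebra_simps)
qed

lemma cnf_prv: "fsize (cnf_form \<phi>) \<le> B \<Longrightarrow> j < length \<phi> \<Longrightarrow>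
  prv R (Impl (cnf_form \<phi>) (clause_form (\<phi> ! j))) (j * (Call R * B) + Call R * B)"
proof (induction \<phi> arbitrary: j rule: cnf_form.induct)
  case 1 thus ?case by simp
next
  case (2 k) thus ?case using m_id[OF fs B2, of "clause_form k"] by simp
next
  case (3 k v va)
  have s: "fsize (clause_form k) \<le> B" "fsize (cnf_form (v # va)) \<le> B" using 3(2) by auto
  show ?case
  proof (cases j)
    case 0
    have "prv R (Impl (Conj (clause_form k) (cnf_form (v # va))) (clause_form k)) (Call R * B)"
      using m_cnf0[OF fs B2 s] .
    thus ?thesis using 0 by simp
  next
    case (Suc j')
    have j': "j' < length (v # va)" using 3(3) Suc by simp
    have IH: "prv R (Impl (cnf_form (v # va)) (clause_form ((v # va) ! j'))) (j' * (Call R * B) + Call R * B)"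
      using 3(1)[OF s(2) j'] .
    have c: "fsize (clause_form ((v # va) ! j')) \<le> B"
      using clause_in_cnf[OF nth_mem[OF j']] s(2) by (rule order.trans)
    from m_cnfS[OF fs B2 s c IH] show ?thesis using Suc by (simp add: algebra_simps)
  qed
qed

lemma yv_prv:
  assumes "fsize (cnf_form \<phi>) \<le> B" "j < length \<phi>" "fsize (trb (\<phi> ! j)) < B"
  shows "prv R (Impl (cnf_form \<phi>) (Iff (trb (\<phi> ! j)) FF)) (5 * B * (Call R * B))"
proof -
  let ?K = "Call R * B" and ?P = "cnf_form \<phi>" and ?k = "\<phi> ! j"
  have c: "fsize (clause_form ?k) \<le> B"
    using clause_in_cnf[OF nth_mem[OF assms(2)]] assms(1) by (rule order.trans)
  have n: "fsize (Neg (trb ?k)) \<le> B" using assms(3) by simp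
  have t: "fsize (trb ?k) \<le> B" using assms(3) by simp
  have p1: "prv R (Impl ?P (clause_form ?k)) (j * ?K + ?K)" using cnf_prv assms(1,2) .
  have p2: "prv R (Impl (clause_form ?k) (Neg (trb ?k))) (2 * length ?k * ?K + ?K)"
    using clause_prv c t .
  have p3: "prv R (Impl ?P (Neg (trb ?k))) (j * ?K + ?K + (2 * length ?k * ?K + ?K) + ?K)"
    using m_syl[OF fs B2 assms(1) c n p1 p2] .
  have p4: "prv R (Impl ?P (Iff (trb ?k) FF)) (j * ?K + ?K + (2 * length ?k * ?K + ?K) + ?K + ?K)"
    using m_ff[OF fs B2 assms(1) t p3] .
  have jl: "j + 2 * length ?k + 4 \<le> 5 * B"
    using assms(2) len_cnf[of \<phi>] len_clause[of ?k] c assms(1) B2 by linarith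
  have "j * ?K + ?K + (2 * length ?k * ?K + ?K) + ?K + ?K = (j + 2 * length ?k + 4) * ?K"
    by (simp add: algebra_simps)
  also have "\<dots> \<le> 5 * B * ?K" using jl by (rule mult_right_mono) simp
  finally show ?thesis using p4 prv_mono by blast
qed

lemma main_prv:
  assumes "fsize (cnf_form \<phi>) \<le> B"
  shows "fsize (to_bool (\<lambda>j. to_bool (\<lambda>_. FF) (Q \<phi> j)) G) < B \<Longrightarrow>
    fsize (to_bool (\<lambda>_. FF) G) \<le> B \<Longrightarrow> yvars G \<subseteq> {..<length \<phi>} \<Longrightarrow>
    prv R (Impl (cnf_form \<phi>) (Iff (to_bool (\<lambda>j. to_bool (\<lambda>_. FF) (Q \<phi> j)) G) (to_bool (\<lambda>_. FF) G)))
      (ncsize G * (5 * B * (Call R * B)))"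
proof (induction G)
  case (XV i)
  have "prv R (Impl (cnf_form \<phi>) (Iff (PVar i) (PVar i))) (Call R * B)"
    using m_refl[OF fs B2 assms(1)] B2 by simp
  moreover have "Call R * B \<le> 5 * B * (Call R * B)" using B2 by simp
  ultimately show ?case using prv_mono by simp
next
  case (YV j)
  have j: "j < length \<phi>" using YV.prems(3) by simp
  have "prv R (Impl (cnf_form \<phi>) (Iff (trb (\<phi> ! j)) FF)) (5 * B * (Call R * B))"
    using yv_prv[OF assms(1) j] YV.prems(1) by (simp add: Q_def)
  thus ?case by (simp add: Q_def)
next
  case Zero
  have "prv R (Impl (cnf_form \<phi>) (Iff FF FF)) (Call R * B)"
    using m_refl[OF fs B2 assms(1)] B2 by simp
  moreover have "Call R * B \<le> 5 * B * (Call R * B)" using B2 by simp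
  ultimately show ?case using prv_mono by simp
next
  case One
  have "prv R (Impl (cnf_form \<phi>) (Iff TT TT)) (Call R * B)"
    using m_refl[OF fs B2 assms(1)] B2 by simp
  moreover have "Call R * B \<le> 5 * B * (Call R * B)" using B2 by simp
  ultimately show ?case using prv_mono by simp
next
  case (Plus a b)
  let ?M = "5 * B * (Call R * B)"
  have ia: "prv R (Impl (cnf_form \<phi>) (Iff (to_bool (\<lambda>j. to_bool (\<lambda>_. FF) (Q \<phi> j)) a) (to_bool (\<lambda>_. FF) a)))
      (ncsize a * ?M)" using Plus by simp
  have ib: "prv R (Impl (cnf_form \<phi>) (Iff (to_bool (\<lambda>j. to_bool (\<lambda>_. FF) (Q \<phi> j)) b) (to_bool (\<lambda>_. FF) b)))
      (ncsize b * ?M)" using Plus by simp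
  have p: "prv R (Impl (cnf_form \<phi>) (Iff (Xor (to_bool (\<lambda>j. to_bool (\<lambda>_. FF) (Q \<phi> j)) a) (to_bool (\<lambda>j. to_bool (\<lambda>_. FF) (Q \<phi> j)) b))
     (Xor (to_bool (\<lambda>_. FF) a) (to_bool (\<lambda>_. FF) b)))) (ncsize a * ?M + ncsize b * ?M + Call R * B)"
    by (rule m_plus[OF fs B2 assms(1) _ _ _ _ ia ib]) (use Plus.prems in auto)
  have "ncsize a * ?M + ncsize b * ?M + Call R * B \<le> ncsize (Plus a b) * ?M"
    using B2 by (simp add: algebra_simps)
  thus ?case using p prv_mono by simp
next
  case (Times a b)
  let ?M = "5 * B * (Call R * B)"
  have ia: "prv R (Impl (cnf_form \<phi>) (Iff (to_bool (\<lambda>j. to_bool (\<lambda>_. FF) (Q \<phi> j)) a) (to_bool (\<lambda>_. FF) a)))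
      (ncsize a * ?M)" using Times by simp
  have ib: "prv R (Impl (cnf_form \<phi>) (Iff (to_bool (\<lambda>j. to_bool (\<lambda>_. FF) (Q \<phi> j)) b) (to_bool (\<lambda>_. FF) b)))
      (ncsize b * ?M)" using Times by simp
  have p: "prv R (Impl (cnf_form \<phi>) (Iff (Conj (to_bool (\<lambda>j. to_bool (\<lambda>_. FF) (Q \<phi> j)) a) (to_bool (\<lambda>j. to_bool (\<lambda>_. FF) (Q \<phi> j)) b))
     (Conj (to_bool (\<lambda>_. FF) a) (to_bool (\<lambda>_. FF) b)))) (ncsize a * ?M + ncsize b * ?M + Call R * B)"
    by (rule m_times[OF fs B2 assms(1) _ _ _ _ ia ib]) (use Times.prems in auto)
  have "ncsize a * ?M + ncsize b * ?M + Call R * B \<le> ncsize (Times a b) * ?M"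
    using B2 by (simp add: algebra_simps)
  thus ?case using p prv_mono by simp
qed

lemma target_prv:
  assumes "fsize (cnf_form \<phi>) \<le> B"
    "fsize (to_bool (\<lambda>j. to_bool (\<lambda>_. FF) (Q \<phi> j)) F) < B"
    "fsize (to_bool (\<lambda>_. FF) F) \<le> B" "yvars F \<subseteq> {..<length \<phi>}"
  shows "prv R (target_formula \<phi> F) (ncsize F * (5 * B * (Call R * B)) + Call R * B)"
  unfolding target_formula_def
  by (rule m_final[OF fs B2 assms(1) _ assms(3) main_prv[OF assms]]) (use assms(2) in simp)

end

theorem lemma5p3:
  assumes "frege_system R"
  shows "\<exists>c d::nat. \<forall>(n::nat) (\<phi>::cnf) (F::ncf).
           is_3cnf \<phi> \<and> cnf_vars \<phi> \<subseteq> {..<n} \<and>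
           xvars F \<subseteq> {..<n} \<and> yvars F \<subseteq> {..<length \<phi>} \<longrightarrow>
           (\<exists>\<pi>. frege_proof R \<pi> (target_formula \<phi> F) \<and>
                proof_size \<pi> \<le> c * (ncsize F + fsize (cnf_form \<phi>)) ^ d)"
proof (rule exI[of _ "216 * Call R"], rule exI[of _ 5], intro allI impI)
  fix n :: nat and \<phi> :: cnf and F :: ncf
  assume h: "is_3cnf \<phi> \<and> cnf_vars \<phi> \<subseteq> {..<n} \<and> xvars F \<subseteq> {..<n} \<and> yvars F \<subseteq> {..<length \<phi>}"
  hence yv: "yvars F \<subseteq> {..<length \<phi>}" by simp
  define p where "p = fsize (cnf_form \<phi>)"
  define N where "N = ncsize F + p"
  define B where "B = 6 * N * N"
  have p1: "1 \<le> p" unfolding p_def by (rule fsize_pos)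
  have n1: "1 \<le> ncsize F" by (cases F) auto
  have N2: "2 \<le> N" using p1 n1 N_def by simp
  have NN: "N \<le> N * N" using N2 by simp
  have B2: "2 \<le> B" using N2 NN unfolding B_def by linarith
  have Pb: "fsize (cnf_form \<phi>) \<le> B" using NN unfolding B_def N_def p_def by linarith
  have qb: "\<forall>j\<in>yvars F. fsize (to_bool (\<lambda>_. FF) (Q \<phi> j)) \<le> 4 * p"
  proof
    fix j assume "j \<in> yvars F"
    hence j: "j < length \<phi>" using yv by auto
    have "fsize (trb (\<phi> ! j)) \<le> 4 * fsize (clause_form (\<phi> ! j))" by (rule trb_le)
    also have "\<dots> \<le> 4 * p" using clause_in_cnf[OF nth_mem[OF j]] p_def by simp
    finally show "fsize (to_bool (\<lambda>_. FF) (Q \<phi> j)) \<le> 4 * p" by (simp add: Q_def)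
  qed
  have f1: "fsize (to_bool (\<lambda>j. to_bool (\<lambda>_. FF) (Q \<phi> j)) F) \<le> ncsize F * (4 * p)"
    by (rule to_bool_size) (use qb p1 in auto)
  have "ncsize F * (4 * p) \<le> N * (4 * N)" unfolding N_def by (intro mult_mono) auto
  have F1: "fsize (to_bool (\<lambda>j. to_bool (\<lambda>_. FF) (Q \<phi> j)) F) < B"
  proof -
    have "0 < N * N" using N2 by simp
    moreover have "ncsize F * (4 * p) = 4 * (ncsize F * p)" by simp
    moreover have "ncsize F * p \<le> N * N" unfolding N_def by (intro mult_mono) auto
    ultimately show ?thesis using f1 unfolding B_def by linarith
  qed
  have f0: "fsize (to_bool (\<lambda>_. FF) F) \<le> ncsize F * 1"
    by (rule to_bool_size) auto
  have "ncsize F \<le> N" unfolding N_def by simp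
  hence F0: "fsize (to_bool (\<lambda>_. FF) F) \<le> B" using f0 NN unfolding B_def by linarith
  have pr: "prv R (target_formula \<phi> F) (ncsize F * (5 * B * (Call R * B)) + Call R * B)"
    using target_prv[OF assms B2 Pb F1 F0 yv] .
  have "ncsize F * (5 * B * (Call R * B)) + Call R * B = (5 * ncsize F * B + 1) * B * Call R"
    by (simp add: algebra_simps)
  also have "\<dots> \<le> (6 * N * B) * B * Call R"
  proof -
    have a: "ncsize F * B \<le> N * B" by (rule mult_right_mono) (simp_all add: N_def)
    have b: "1 \<le> N * B" using N2 B2 by (simp add: Suc_le_eq)
    have e: "5 * ncsize F * B = 5 * (ncsize F * B)" "6 * N * B = 6 * (N * B)" by simp_all
    have "5 * ncsize F * B + 1 \<le> 6 * N * B" unfolding e using a b by linarith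
    hence "(5 * ncsize F * B + 1) * B \<le> (6 * N * B) * B" by (rule mult_right_mono) simp
    thus ?thesis by (rule mult_right_mono) simp
  qed
  also have "\<dots> = 216 * Call R * N ^ 5" unfolding B_def by (simp add: eval_nat_numeral algebra_simps)
  finally have "prv R (target_formula \<phi> F) (216 * Call R * N ^ 5)" using pr prv_mono by blast
  thus "\<exists>\<pi>. frege_proof R \<pi> (target_formula \<phi> F) \<and>
      proof_size \<pi> \<le> (216 * Call R) * (ncsize F + fsize (cnf_form \<phi>)) ^ 5"
    unfolding prv_def frege_proof_def N_def p_def by blast
qed

end
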